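(* Let $w_1,\dots,w_n$ be real weights, and let $a_1\ge\cdots\ge a_n$ and $b_1\ge\cdots\ge b_n$ be real numbers in $[a,b]$ such that $\min(a_i,b_i)\ge\max(a_{i+1},b_{i+1})$ for $1\le i<n$, \[ \sum_{i=1}^n w_ia_i=\sum_{i=1}^n w_ib_i,\qquad \sum_{i=1}^n w_ia_i^2=\sum_{i=1}^n w_ib_i^2, \] and \[ \sum_{i=1}^j w_i(a_i-a_{j+1})(a_i-b_{j+1})\ge\sum_{i=1}^j w_i(b_i-a_{j+1})(b_i-b_{j+1})\quad\text{for all }1\le j<n. \] Then $\sum_{i=1}^n w_if(a_i)\ge\sum_{i=1}^n w_if(b_i)$ for every three times differentiable $f:[a,b]\to\mathbb{R}$ with $f'''\ge 0$. *)

theory Defs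
  imports "HOL-Analysis.Analysis"
begin

end

theory Submission
  imports Defs
begin


lemma taylor3:
  fixes f f' f'' f''' :: "real \<Rightarrow> real" and lo hi x :: real
  assumes d1: "\<And>x. x \<in> {lo..hi} \<Longrightarrow> (f has_real_derivative f' x) (at x within {lo..hi})"
    and d2: "\<And>x. x \<in> {lo..hi} \<Longrightarrow> (f' has_real_derivative f'' x) (at x within {lo..hi})"
    and d3: "\<And>x. x \<in> {lo..hi} \<Longrightarrow> (f'' has_real_derivative f''' x) (at x within {lo..hi})"
    and x: "x \<in> {lo..hi}"
  shows "((\<lambda>t. (max (x - t) 0)^2 / 2 * f''' t) has_integral
           (f x - (f lo + (x - lo) * f' lo + (x - lo)^2 / 2 * f'' lo))) {lo..hi}"
proof -
  define Df where "Df = (\<lambda>m::nat. if m = 0 then f else if m = 1 then f' else if m = 2 then f'' else f''')"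
  have sub: "{lo..x} \<subseteq> {lo..hi}" using x by auto
  have Df: "(Df m has_vector_derivative Df (Suc m) t) (at t within {lo..x})"
    if "m < 3" "lo \<le> t" "t \<le> x" for m t
  proof -
    have t: "t \<in> {lo..hi}" using that x by auto
    have "m = 0 \<or> m = 1 \<or> m = 2" using that by auto
    then have "(Df m has_real_derivative Df (Suc m) t) (at t within {lo..hi})"
      using d1[OF t] d2[OF t] d3[OF t] by (auto simp: Df_def)
    then show ?thesis
      by (simp add: has_real_derivative_iff_has_vector_derivative has_vector_derivative_within_subset[OF _ sub])
  qed
  have I: "((\<lambda>t. ((x - t) ^ (3 - 1) / fact (3 - 1)) *\<^sub>R Df 3 t) has_integral
      f x - (\<Sum>i<3. ((x - lo) ^ i / fact i) *\<^sub>R Df i lo)) {lo..x}"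
    by (rule Taylor_has_integral[of 3 Df f]) (use Df x in \<open>auto simp: Df_def\<close>)
  have sum3: "(\<Sum>i<3. ((x - lo) ^ i / fact i) *\<^sub>R Df i lo) = f lo + (x - lo) * f' lo + (x - lo)^2 / 2 * f'' lo"
    by (simp add: Df_def numeral_3_eq_3 lessThan_Suc eval_nat_numeral)
  have I1: "((\<lambda>t. (max (x - t) 0)^2 / 2 * f''' t) has_integral
           (f x - (f lo + (x - lo) * f' lo + (x - lo)^2 / 2 * f'' lo))) {lo..x}"
    apply (rule has_integral_eq[OF _ I[unfolded sum3]])
    by (auto simp: Df_def sum3 max_def)
  have I2: "((\<lambda>t. (max (x - t) 0)^2 / 2 * f''' t) has_integral 0) {x..hi}"
    by (rule has_integral_is_0) (auto simp: max_def)
  show ?thesis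
    using has_integral_combine[OF _ _ I1 I2] x by (simp add: sum3)
qed


lemma lin_between:
  fixes P Q x y t :: real
  assumes "x \<le> t" "t \<le> y" "P - t*Q \<ge> 0 \<or> True" "P - x*Q \<ge> 0" "P - y*Q \<ge> 0"
  shows "P - t*Q \<ge> 0"
proof (cases "Q \<ge> 0")
  case True
  have "t*Q \<le> y*Q" using assms True by (simp add: mult_right_mono)
  then show ?thesis using assms by linarith
next
  case False
  have "x*Q \<ge> t*Q" using assms False by (simp add: mult_right_mono_neg)
  then show ?thesis using assms by linarith
qed

lemma core:
  fixes P Q w x y t :: real
  assumes t1: "min x y \<le> t" and t2: "t \<le> max x y"
    and HA: "\<And>u. (x+y)/2 \<le> u \<Longrightarrow> u \<le> max x y \<Longrightarrow> P - 2*u*Q \<ge> 0"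
    and HB: "\<And>u. min x y \<le> u \<Longrightarrow> u \<le> (x+y)/2 \<Longrightarrow> P - 2*u*Q + w*((x-u)^2-(y-u)^2) \<ge> 0"
  shows "P - 2*t*Q + w*((max (x-t) 0)^2 - (max (y-t) 0)^2) \<ge> 0"
proof (cases "y \<le> x")
  case yx: True
  have e: "(max (x-t) 0)^2 - (max (y-t) 0)^2 = (x-t)^2" using yx t1 t2 by (auto simp: max_def)
  show ?thesis
  proof (cases "w \<ge> 0")
    case True
    show ?thesis
    proof (cases "t \<ge> (x+y)/2")
      case True
      have "w*(x-t)^2 \<ge> 0" using \<open>w\<ge>0\<close> by simp
      then show ?thesis unfolding e using HA[of t] t2 True by (simp add: algebra_simps)
    next
      case False
      have "w*(y-t)^2 \<ge> 0" using \<open>w\<ge>0\<close> by simp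
      then show ?thesis unfolding e using HB[of t] t1 False by (simp add: algebra_simps)
    qed
  next
    case False
    have q: "w*(x-t)^2 \<ge> w*((x-t)*(x-y))"
    proof -
      have "(x-t)^2 \<le> (x-t)*(x-y)" using t1 t2 yx
        by (simp add: power2_eq_square mult_left_mono)
      then show ?thesis using False by (simp add: mult_left_mono_neg)
    qed
    have R: "(P + w*x*(x-y)) - t*(2*Q + w*(x-y)) \<ge> 0"
    proof (rule lin_between[of y t x])
      show "(P + w*x*(x-y)) - x*(2*Q + w*(x-y)) \<ge> 0" using HA[of x] yx by (simp add: algebra_simps)
      show "(P + w*x*(x-y)) - y*(2*Q + w*(x-y)) \<ge> 0" using HB[of y] yx
        by (simp add: algebra_simps power2_eq_square)
    qed (use t1 t2 yx in auto)
    have "P - 2*t*Q + w*(x-t)^2 \<ge> (P + w*x*(x-y)) - t*(2*Q + w*(x-y))"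
      using q by (simp add: algebra_simps)
    then show ?thesis unfolding e using R by linarith
  qed
next
  case xy: False
  have e: "(max (x-t) 0)^2 - (max (y-t) 0)^2 = -((y-t)^2)" using xy t1 t2 by (auto simp: max_def)
  show ?thesis
  proof (cases "w \<le> 0")
    case True
    show ?thesis
    proof (cases "t \<ge> (x+y)/2")
      case True
      have "- w*(y-t)^2 \<ge> 0" using \<open>w\<le>0\<close> by (simp add: mult_nonpos_nonneg)
      then show ?thesis unfolding e using HA[of t] t2 True by (simp add: algebra_simps)
    next
      case False
      have "w*(x-t)^2 \<le> 0" using \<open>w\<le>0\<close> by (simp add: mult_nonpos_nonneg)
      then show ?thesis unfolding e using HB[of t] t1 False by (simp add: algebra_simps)
    qed
  next
    case False
    have q: "- w*(y-t)^2 \<ge> - w*((y-t)*(y-x))"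
    proof -
      have "(y-t)^2 \<le> (y-t)*(y-x)" using t1 t2 xy
        by (simp add: power2_eq_square mult_left_mono)
      then show ?thesis using False by simp
    qed
    have R: "(P - w*y*(y-x)) - t*(2*Q - w*(y-x)) \<ge> 0"
    proof (rule lin_between[of x t y])
      show "(P - w*y*(y-x)) - y*(2*Q - w*(y-x)) \<ge> 0" using HA[of y] xy by (simp add: algebra_simps)
      show "(P - w*y*(y-x)) - x*(2*Q - w*(y-x)) \<ge> 0" using HB[of x] xy
        by (simp add: algebra_simps power2_eq_square)
    qed (use t1 t2 xy in auto)
    have "P - 2*t*Q - w*(y-t)^2 \<ge> (P - w*y*(y-x)) - t*(2*Q - w*(y-x))"
      using q by (simp add: algebra_simps)
    then show ?thesis unfolding e using R by linarith
  qed
qed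


definition LL :: "(nat \<Rightarrow> real) \<Rightarrow> (nat \<Rightarrow> real) \<Rightarrow> (nat \<Rightarrow> real) \<Rightarrow> nat \<Rightarrow> real \<Rightarrow> real" where
  "LL w a b j t = (\<Sum>i=1..j. w i * ((a i - t)^2 - (b i - t)^2))"

lemma LL_lin: "LL w a b j t = (\<Sum>i=1..j. w i * (a i ^2 - b i ^2)) - 2 * t * (\<Sum>i=1..j. w i * (a i - b i))"
proof -
  have "LL w a b j t = (\<Sum>i=1..j. w i * (a i ^2 - b i ^2) - 2 * t * (w i * (a i - b i)))"
    unfolding LL_def by (rule sum.cong) (auto simp: power2_eq_square algebra_simps)
  also have "\<dots> = (\<Sum>i=1..j. w i * (a i ^2 - b i ^2)) - 2 * t * (\<Sum>i=1..j. w i * (a i - b i))"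
    by (simp add: sum_subtractf sum_distrib_left)
  finally show ?thesis .
qed

lemma LL_Suc: "LL w a b (Suc j) t = LL w a b j t + w (Suc j) * ((a (Suc j) - t)^2 - (b (Suc j) - t)^2)"
  unfolding LL_def by simp

lemma LL_0: "LL w a b 0 t = 0" unfolding LL_def by simp

context
  fixes n :: nat and w a b :: "nat \<Rightarrow> real"
  assumes interlace: "\<And>i. 1 \<le> i \<Longrightarrow> i < n \<Longrightarrow>
                       min (a i) (b i) \<ge> max (a (i + 1)) (b (i + 1))"
    and sum1: "(\<Sum>i=1..n. w i * a i) = (\<Sum>i=1..n. w i * b i)"
    and sum2: "(\<Sum>i=1..n. w i * (a i)\<^sup>2) = (\<Sum>i=1..n. w i * (b i)\<^sup>2)"
    and partial: "\<And>j. 1 \<le> j \<Longrightarrow> j < n \<Longrightarrow>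
         (\<Sum>i=1..j. w i * (a i - a (j + 1)) * (a i - b (j + 1)))
           \<ge> (\<Sum>i=1..j. w i * (b i - a (j + 1)) * (b i - b (j + 1)))"
begin

lemma chain: "1 \<le> i \<Longrightarrow> i < k \<Longrightarrow> k \<le> n \<Longrightarrow> max (a k) (b k) \<le> min (a i) (b i)"
proof (induction k)
  case 0 then show ?case by simp
next
  case (Suc k)
  show ?case
  proof (cases "i = k")
    case True
    then show ?thesis using interlace[of i] Suc.prems by simp
  next
    case False
    then have "max (a k) (b k) \<le> min (a i) (b i)" using Suc by simp
    moreover have "max (a (Suc k)) (b (Suc k)) \<le> min (a k) (b k)"
      using interlace[of k] Suc.prems False by simp
    ultimately show ?thesis by linarith
  qed
qed

lemma LL_n: "LL w a b n t = 0"
proof -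
  have "(\<Sum>i=1..n. w i * (a i ^2 - b i ^2)) = 0"
    using sum2 by (simp add: sum_subtractf right_diff_distrib)
  moreover have "(\<Sum>i=1..n. w i * (a i - b i)) = 0"
    using sum1 by (simp add: sum_subtractf right_diff_distrib)
  ultimately show ?thesis by (simp add: LL_lin)
qed

lemma LL_mid_next: "1 \<le> j \<Longrightarrow> j < n \<Longrightarrow> LL w a b j ((a (j+1) + b (j+1))/2) \<ge> 0"
proof -
  assume j: "1 \<le> j" "j < n"
  define m where "m = (a (j+1) + b (j+1))/2"
  have "LL w a b j m = (\<Sum>i=1..j. w i * (a i - a (j + 1)) * (a i - b (j + 1)))
        - (\<Sum>i=1..j. w i * (b i - a (j + 1)) * (b i - b (j + 1)))"
    unfolding LL_def sum_subtractf[symmetric]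
    by (rule sum.cong) (auto simp: m_def power2_eq_square field_simps)
  then show ?thesis using partial[OF j] by (simp add: m_def)
qed

lemma LL_mid: "1 \<le> j \<Longrightarrow> j \<le> n \<Longrightarrow> LL w a b j ((a j + b j)/2) \<ge> 0"
proof -
  assume j: "1 \<le> j" "j \<le> n"
  then obtain k where k: "j = Suc k" by (cases j) auto
  have z: "(a j - (a j + b j)/2)^2 - (b j - (a j + b j)/2)^2 = 0"
    by (simp add: power2_eq_square field_simps)
  show ?thesis
  proof (cases "k = 0")
    case True
    then show ?thesis using k z by (simp add: LL_Suc LL_0)
  next
    case False
    then have "LL w a b k ((a (k+1) + b (k+1))/2) \<ge> 0" using LL_mid_next[of k] j k by simp
    then show ?thesis using k z by (simp add: LL_Suc)
  qed
qed

lemma LL_nonneg: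
  assumes "j \<le> n" "1 \<le> j \<Longrightarrow> t \<le> (a j + b j)/2" "j < n \<Longrightarrow> (a (j+1) + b (j+1))/2 \<le> t"
  shows "LL w a b j t \<ge> 0"
proof (cases "j = 0")
  case True then show ?thesis by (simp add: LL_0)
next
  case j0: False
  show ?thesis
  proof (cases "j = n")
    case True then show ?thesis by (simp add: LL_n)
  next
    case False
    have A: "LL w a b j ((a j + b j)/2) \<ge> 0" using LL_mid[of j] j0 assms by simp
    have B: "LL w a b j ((a (j+1) + b (j+1))/2) \<ge> 0" using LL_mid_next[of j] j0 False assms by simp
    define P where "P = (\<Sum>i=1..j. w i * (a i ^2 - b i ^2))"
    define Q where "Q = 2 * (\<Sum>i=1..j. w i * (a i - b i))"
    have L: "\<And>s. LL w a b j s = P - s*Q" unfolding LL_lin P_def Q_def by simp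
    have "P - t*Q \<ge> 0"
      by (rule lin_between[of "(a (j+1) + b (j+1))/2" t "(a j + b j)/2"])
        (use A B assms j0 False in \<open>simp_all add: L\<close>)
    then show ?thesis by (simp add: L)
  qed
qed

lemma phi_nonneg:
  "(\<Sum>i=1..n. w i * ((max (a i - t) 0)^2 - (max (b i - t) 0)^2)) \<ge> 0"
proof -
  define g where "g i = w i * ((max (a i - t) 0)^2 - (max (b i - t) 0)^2)" for i
  define S where "S = {i. i \<le> n \<and> (i = 0 \<or> t < min (a i) (b i))}"
  have finS: "finite S" unfolding S_def by auto
  have S0: "0 \<in> S" unfolding S_def by auto
  define k where "k = Max S"
  have kS: "k \<in> S" unfolding k_def using finS S0 Max_in by blast
  have kmax: "\<And>i. i \<in> S \<Longrightarrow> i \<le> k" unfolding k_def using finS by simp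
  have kn: "k \<le> n" using kS unfolding S_def by auto
  have H1: "t < min (a i) (b i)" if "1 \<le> i" "i \<le> k" for i
  proof (cases "i = k")
    case True then show ?thesis using kS that unfolding S_def by auto
  next
    case False
    then have "max (a k) (b k) \<le> min (a i) (b i)" using chain[of i k] that kn by simp
    moreover have "t < min (a k) (b k)" using kS that unfolding S_def by auto
    ultimately show ?thesis by linarith
  qed
  have H2: "min (a i) (b i) \<le> t" if "k < i" "i \<le> n" for i
  proof (rule ccontr)
    assume "\<not> min (a i) (b i) \<le> t"
    then have "i \<in> S" unfolding S_def using that by auto
    then show False using kmax that by fastforce
  qed
  have split: "{1..n} = {1..k} \<union> {Suc k..n}" using kn by auto
  have "(\<Sum>i=1..n. g i) = (\<Sum>i=1..k. g i) + (\<Sum>i=Suc k..n. g i)"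
    unfolding split by (rule sum.union_disjoint) auto
  moreover have "(\<Sum>i=1..k. g i) = LL w a b k t"
  proof (unfold LL_def, rule sum.cong)
    fix i assume "i \<in> {1..k}"
    then have "t < a i" "t < b i" using H1[of i] by auto
    then show "g i = w i * ((a i - t)^2 - (b i - t)^2)" by (simp add: g_def max_def)
  qed simp
  ultimately have E: "(\<Sum>i=1..n. g i) = LL w a b k t + (\<Sum>i=Suc k..n. g i)" by simp
  show ?thesis
  proof (cases "k = n")
    case True
    then show ?thesis using E by (simp add: LL_n g_def)
  next
    case False
    then have kn': "k < n" using kn by simp
    define p where "p = Suc k"
    have mnp: "min (a p) (b p) \<le> t" using H2[of p] kn' by (simp add: p_def)
    have G0: "g i = 0" if "p < i" "i \<le> n" for i
    proof -
      have "max (a i) (b i) \<le> min (a p) (b p)" using chain[of p i] that by (simp add: p_def)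
      then have "a i \<le> t" "b i \<le> t" using mnp by auto
      then show ?thesis by (simp add: g_def max_def)
    qed
    have split2: "{Suc k..n} = {p} \<union> {Suc p..n}" using kn' by (auto simp: p_def)
    have "(\<Sum>i=Suc k..n. g i) = g p + (\<Sum>i=Suc p..n. g i)"
      unfolding split2 by (subst sum.union_disjoint) auto
    moreover have "(\<Sum>i=Suc p..n. g i) = 0" using G0 by simp
    ultimately have E2: "(\<Sum>i=1..n. g i) = LL w a b k t + g p" using E by simp
    have mk: "1 \<le> k \<Longrightarrow> max (a p) (b p) \<le> (a k + b k)/2"
      using chain[of k p] kn' by (auto simp: p_def max_def)
    show ?thesis
    proof (cases "max (a p) (b p) \<le> t")
      case True
      then have "a p \<le> t" "b p \<le> t" by auto
      then have "g p = 0" by (simp add: g_def max_def)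
      moreover have "LL w a b k t \<ge> 0"
      proof (rule LL_nonneg)
        show "k \<le> n" by fact
        show "1 \<le> k \<Longrightarrow> t \<le> (a k + b k) / 2" using H1[of k] by simp
        show "k < n \<Longrightarrow> (a (k + 1) + b (k + 1)) / 2 \<le> t" using True by (simp add: p_def)
      qed
      ultimately have "(\<Sum>i=1..n. g i) \<ge> 0" using E2 by simp
      then show ?thesis by (simp add: g_def)
    next
      case False
      have HA: "LL w a b k s \<ge> 0" if "(a p + b p)/2 \<le> s" "s \<le> max (a p) (b p)" for s
      proof (rule LL_nonneg)
        show "k \<le> n" by fact
        show "1 \<le> k \<Longrightarrow> s \<le> (a k + b k) / 2" using mk that by linarith
        show "k < n \<Longrightarrow> (a (k + 1) + b (k + 1)) / 2 \<le> s" using that by (simp add: p_def)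
      qed
      have HB: "LL w a b p s \<ge> 0" if "min (a p) (b p) \<le> s" "s \<le> (a p + b p)/2" for s
      proof (rule LL_nonneg)
        show "p \<le> n" using kn' by (simp add: p_def)
        show "1 \<le> p \<Longrightarrow> s \<le> (a p + b p) / 2" using that by simp
        show "(a (p + 1) + b (p + 1)) / 2 \<le> s" if "p < n"
        proof -
          have "max (a (p+1)) (b (p+1)) \<le> min (a p) (b p)" using chain[of p "p+1"] that by (simp add: p_def)
          then show ?thesis using \<open>min (a p) (b p) \<le> s\<close> by (auto simp: max_def min_def split: if_splits)
        qed
      qed
      define P where "P = (\<Sum>i=1..k. w i * (a i ^2 - b i ^2))"
      define Q where "Q = (\<Sum>i=1..k. w i * (a i - b i))"
      have L: "\<And>u. LL w a b k u = P - 2*u*Q" unfolding LL_lin P_def Q_def by simp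
      have LS: "\<And>u. LL w a b p u = P - 2*u*Q + w p * ((a p - u)^2 - (b p - u)^2)"
        unfolding p_def LL_Suc using L by (simp add: p_def)
      have "P - 2*t*Q + w p * ((max (a p - t) 0)^2 - (max (b p - t) 0)^2) \<ge> 0"
      proof (rule core)
        show "min (a p) (b p) \<le> t" by fact
        show "t \<le> max (a p) (b p)" using False by linarith
        show "\<And>u. (a p + b p)/2 \<le> u \<Longrightarrow> u \<le> max (a p) (b p) \<Longrightarrow> P - 2*u*Q \<ge> 0"
          using HA L by metis
        show "\<And>u. min (a p) (b p) \<le> u \<Longrightarrow> u \<le> (a p + b p)/2 \<Longrightarrow>
            P - 2*u*Q + w p*((a p-u)^2-(b p-u)^2) \<ge> 0"
          using HB LS by metis
      qed
      then have "(\<Sum>i=1..n. g i) \<ge> 0" using E2 L by (simp add: g_def)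
      then show ?thesis by (simp add: g_def)
    qed
  qed
qed

end

theorem mainTheorem11:
  fixes n :: nat and w a b :: "nat \<Rightarrow> real" and lo hi :: real
    and f f' f'' f''' :: "real \<Rightarrow> real"
  assumes range_a: "\<And>i. i \<in> {1..n} \<Longrightarrow> a i \<in> {lo..hi}"
    and range_b: "\<And>i. i \<in> {1..n} \<Longrightarrow> b i \<in> {lo..hi}"
    and mono_a: "\<And>i. 1 \<le> i \<Longrightarrow> i < n \<Longrightarrow> a (i + 1) \<le> a i"
    and mono_b: "\<And>i. 1 \<le> i \<Longrightarrow> i < n \<Longrightarrow> b (i + 1) \<le> b i"
    and interlace: "\<And>i. 1 \<le> i \<Longrightarrow> i < n \<Longrightarrow>
                       min (a i) (b i) \<ge> max (a (i + 1)) (b (i + 1))"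
    and sum1: "(\<Sum>i=1..n. w i * a i) = (\<Sum>i=1..n. w i * b i)"
    and sum2: "(\<Sum>i=1..n. w i * (a i)\<^sup>2) = (\<Sum>i=1..n. w i * (b i)\<^sup>2)"
    and partial: "\<And>j. 1 \<le> j \<Longrightarrow> j < n \<Longrightarrow>
         (\<Sum>i=1..j. w i * (a i - a (j + 1)) * (a i - b (j + 1)))
           \<ge> (\<Sum>i=1..j. w i * (b i - a (j + 1)) * (b i - b (j + 1)))"
    and d1: "\<And>x. x \<in> {lo..hi} \<Longrightarrow> (f has_real_derivative f' x) (at x within {lo..hi})"
    and d2: "\<And>x. x \<in> {lo..hi} \<Longrightarrow> (f' has_real_derivative f'' x) (at x within {lo..hi})"
    and d3: "\<And>x. x \<in> {lo..hi} \<Longrightarrow> (f'' has_real_derivative f''' x) (at x within {lo..hi})"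
    and f3_nonneg: "\<And>x. x \<in> {lo..hi} \<Longrightarrow> f''' x \<ge> 0"
  shows "(\<Sum>i=1..n. w i * f (a i)) \<ge> (\<Sum>i=1..n. w i * f (b i))"
proof -
  define T where "T x = f lo + (x - lo) * f' lo + (x - lo)^2 / 2 * f'' lo" for x
  define G where "G x t = (max (x - t) 0)^2 / 2 * f''' t" for x t
  have HI: "((\<lambda>t. \<Sum>i\<in>{1..n}. w i * (G (a i) t - G (b i) t)) has_integral
      (\<Sum>i\<in>{1..n}. w i * ((f (a i) - T (a i)) - (f (b i) - T (b i))))) {lo..hi}"
  proof (rule has_integral_sum)
    fix i assume i: "i \<in> {1..n}"
    show "((\<lambda>t. w i * (G (a i) t - G (b i) t)) has_integral
        w i * ((f (a i) - T (a i)) - (f (b i) - T (b i)))) {lo..hi}"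
      unfolding G_def T_def
      by (intro has_integral_mult_right has_integral_diff taylor3[OF d1 d2 d3] range_a range_b i)
  qed simp
  have nn: "0 \<le> (\<Sum>i\<in>{1..n}. w i * (G (a i) t - G (b i) t))" if t: "t \<in> {lo..hi}" for t
  proof -
    have E: "(\<Sum>i\<in>{1..n}. w i * (G (a i) t - G (b i) t)) =
      (\<Sum>i=1..n. w i * ((max (a i - t) 0)^2 - (max (b i - t) 0)^2)) * (f''' t / 2)"
      unfolding sum_distrib_right G_def by (rule sum.cong) (auto simp: algebra_simps)
    have A: "(\<Sum>i=1..n. w i * ((max (a i - t) 0)^2 - (max (b i - t) 0)^2)) \<ge> 0"
      by (rule phi_nonneg[OF interlace sum1 sum2 partial])
    have B: "f''' t / 2 \<ge> 0" using f3_nonneg[OF t] by simp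
    show ?thesis unfolding E by (rule mult_nonneg_nonneg[OF A B])
  qed
  have V: "0 \<le> (\<Sum>i\<in>{1..n}. w i * ((f (a i) - T (a i)) - (f (b i) - T (b i))))"
    by (rule has_integral_nonneg[OF HI nn])
  define D1 where "D1 i = w i * a i - w i * b i" for i
  define D2 where "D2 i = w i * (a i)^2 - w i * (b i)^2" for i
  have S1: "(\<Sum>i=1..n. D1 i) = 0" using sum1 by (simp add: D1_def sum_subtractf)
  have S2: "(\<Sum>i=1..n. D2 i) = 0" using sum2 by (simp add: D2_def sum_subtractf)
  have "(\<Sum>i\<in>{1..n}. w i * (T (a i) - T (b i))) =
      (\<Sum>i\<in>{1..n}. f' lo * D1 i + (f'' lo / 2) * D2 i - (f'' lo * lo) * D1 i)"
    unfolding T_def D1_def D2_def by (rule sum.cong) (auto simp: power2_eq_square field_simps)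
  also have "\<dots> = f' lo * (\<Sum>i=1..n. D1 i) + (f'' lo / 2) * (\<Sum>i=1..n. D2 i) - (f'' lo * lo) * (\<Sum>i=1..n. D1 i)"
    by (simp add: sum.distrib sum_subtractf sum_distrib_left)
  finally have "(\<Sum>i\<in>{1..n}. w i * (T (a i) - T (b i))) = 0" using S1 S2 by simp
  moreover have "(\<Sum>i\<in>{1..n}. w i * ((f (a i) - T (a i)) - (f (b i) - T (b i))))
     = (\<Sum>i=1..n. w i * f (a i)) - (\<Sum>i=1..n. w i * f (b i)) - (\<Sum>i\<in>{1..n}. w i * (T (a i) - T (b i)))"
    by (simp add: sum_subtractf[symmetric] algebra_simps)
  ultimately show ?thesis using V by simp
qed

end
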